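(* Let $A$ be a finite alphabet and let $f : A^* \to \mathbb{N}$ be a polyblind function. Then $f$ is $k$-repetitive for every integer $k \ge 1$.
   Context: A bimachine is a tuple $(A, M, \mu, \lambda)$ where $A$ is a finite alphabet, $M$ a finite monoid, $\mu : A^* \to M$ a monoid morphism and $\lambda : M \times A \times M \to \mathbb{N}$; it computes $f(w) = \sum_{i=1}^{|w|} \lambda(\mu(w[1{:}i-1]), w[i], \mu(w[i+1{:}|w|]))$. A function $A^* \to \mathbb{N}$ is regular if it is computed by a bimachine. The polyblind functions are the smallest class of functions $A^* \to \mathbb{N}$ containing the regular functions and closed under sum $f+g$ and Hadamard (pointwise) product $(f \cdot g)(w) = f(w) g(w)$. For $k \ge 1$, a function $f : A^* \to \mathbb{N}$ is $k$-repetitive if there exists an integer $\omega_0 \ge 1$ such that for all words $\alpha, \beta, \alpha_0, u_1, \alpha_1, \dots, u_k, \alpha_k \in A^*$ and every positive multiple $\omega$ of $\omega_0$, setting $W(Z_1,\dots,Z_k) = \alpha_0 \prod_{i=1}^k u_i^{\omega Z_i} \alpha_i$ and $w = W(1,\dots,1)$, there exists a function $F : \mathbb{N}^k \to \mathbb{N}$ such that for all integers $X_1,\dots,X_k,Y_1,\dots,Y_k \ge 3$, $f(\alpha\, w^{2\omega-1} W(X_1,\dots,X_k)\, w^{\omega-1}\, W(Y_1,\dots,Y_k)\, w^{\omega}\, \beta) = F(X_1+Y_1, \dots, X_k+Y_k)$. *)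

theory Defs
  imports "HOL-Algebra.Group"
begin

text \<open>Words over the finite alphabet 'a are lists. A finite monoid is represented
  (up to isomorphism) by a HOL-Algebra monoid whose carrier is a finite set of naturals.\<close>

definition bimachine_fun ::
  "(nat, 'b) monoid_scheme \<Rightarrow> ('a list \<Rightarrow> nat) \<Rightarrow> (nat \<Rightarrow> 'a \<Rightarrow> nat \<Rightarrow> nat) \<Rightarrow> 'a list \<Rightarrow> nat" where
  "bimachine_fun M \<mu> lam w = (\<Sum>i<length w. lam (\<mu> (take i w)) (w ! i) (\<mu> (drop (Suc i) w)))"

definition is_bimachine ::
  "(nat, 'b) monoid_scheme \<Rightarrow> ('a list \<Rightarrow> nat) \<Rightarrow> bool" where
  "is_bimachine M \<mu> \<longleftrightarrow> monoid M \<and> finite (carrier M) \<and>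
     (\<forall>w. \<mu> w \<in> carrier M) \<and> \<mu> [] = \<one>\<^bsub>M\<^esub> \<and>
     (\<forall>u v. \<mu> (u @ v) = \<mu> u \<otimes>\<^bsub>M\<^esub> \<mu> v)"

definition regular_fun :: "('a::finite list \<Rightarrow> nat) \<Rightarrow> bool" where
  "regular_fun f \<longleftrightarrow> (\<exists>(M :: nat monoid) \<mu> lam. is_bimachine M \<mu> \<and> f = bimachine_fun M \<mu> lam)"

inductive polyblind :: "('a::finite list \<Rightarrow> nat) \<Rightarrow> bool" where
  reg: "regular_fun f \<Longrightarrow> polyblind f"
| sum: "polyblind f \<Longrightarrow> polyblind g \<Longrightarrow> polyblind (\<lambda>w. f w + g w)"
| prod: "polyblind f \<Longrightarrow> polyblind g \<Longrightarrow> polyblind (\<lambda>w. f w * g w)"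

definition wpow :: "'a list \<Rightarrow> nat \<Rightarrow> 'a list" where
  "wpow u n = concat (replicate n u)"

text \<open>W(Z_1..Z_k) = alpha_0 prod_{i=1}^k u_i^{omega Z_i} alpha_i, with 0-based lists:
  as = [alpha_0..alpha_k], us = [u_1..u_k], Z = [Z_1..Z_k].\<close>
definition Wword :: "nat \<Rightarrow> 'a list list \<Rightarrow> 'a list list \<Rightarrow> nat \<Rightarrow> nat list \<Rightarrow> 'a list" where
  "Wword k as us \<omega> Z = as ! 0 @ concat (map (\<lambda>i. wpow (us ! i) (\<omega> * Z ! i) @ as ! Suc i) [0..<k])"

definition k_repetitive :: "nat \<Rightarrow> ('a list \<Rightarrow> nat) \<Rightarrow> bool" where
  "k_repetitive k f \<longleftrightarrow> (\<exists>\<omega>0::nat. \<omega>0 \<ge> 1 \<and>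
     (\<forall>\<alpha> \<beta> (as :: 'a list list) (us :: 'a list list) (\<omega>::nat).
        length as = k + 1 \<longrightarrow> length us = k \<longrightarrow> \<omega>0 dvd \<omega> \<longrightarrow> \<omega> > 0 \<longrightarrow>
        (let w = Wword k as us \<omega> (replicate k 1) in
         \<exists>F :: nat list \<Rightarrow> nat. \<forall>X Y :: nat list.
           length X = k \<longrightarrow> length Y = k \<longrightarrow> (\<forall>i<k. X ! i \<ge> 3 \<and> Y ! i \<ge> 3) \<longrightarrow>
           f (\<alpha> @ wpow w (2 * \<omega> - 1) @ Wword k as us \<omega> X @ wpow w (\<omega> - 1) @
              Wword k as us \<omega> Y @ wpow w \<omega> @ \<beta>) = F (map2 (+) X Y))))"

end

theory Submission
  imports Defs
begin

fun cc :: "(nat,'b) monoid_scheme \<Rightarrow> ('a list \<Rightarrow> nat) \<Rightarrow> (nat \<Rightarrow> 'a \<Rightarrow> nat \<Rightarrow> nat) \<Rightarrow> nat \<Rightarrow> 'a list \<Rightarrow> nat \<Rightarrow> nat" where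
  "cc M \<mu> lam L [] R = 0"
| "cc M \<mu> lam L (a # v) R = lam L a (\<mu> v \<otimes>\<^bsub>M\<^esub> R) + cc M \<mu> lam (L \<otimes>\<^bsub>M\<^esub> \<mu> [a]) v R"

lemma wpow_add: "wpow u (a + b) = wpow u a @ wpow u b"
  by (simp add: wpow_def replicate_add)

lemma wpow_Suc: "wpow u (Suc n) = u @ wpow u n"
  by (simp add: wpow_def)

lemma wpow_Suc_right: "wpow u (Suc n) = wpow u n @ u"
  using wpow_add[of u n 1] by (simp add: wpow_def)

lemma wpow_0[simp]: "wpow u 0 = []"
  by (simp add: wpow_def)

lemma wpow_mult: "wpow u (\<omega> * X) = wpow (wpow u \<omega>) X"
  by (induction X) (simp_all add: wpow_add wpow_Suc)

lemma Wword_Suc: "Wword (Suc k) as us \<omega> Z = Wword k as us \<omega> Z @ wpow (us ! k) (\<omega> * Z ! k) @ as ! Suc k"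
  by (simp add: Wword_def)

lemma Wword_0: "Wword 0 as us \<omega> Z = as ! 0"
  by (simp add: Wword_def)

locale bm =
  fixes M :: "nat monoid" (structure) and \<mu> :: "'a list \<Rightarrow> nat"
  assumes bm: "is_bimachine M \<mu>"
begin

lemma mon: "monoid M" using bm by (simp add: is_bimachine_def)

sublocale monoid M by (rule mon)

lemma mu_in[simp]: "\<mu> w \<in> carrier M" using bm by (simp add: is_bimachine_def)
lemma mu_nil[simp]: "\<mu> [] = \<one>" using bm by (simp add: is_bimachine_def)
lemma mu_app: "\<mu> (u @ v) = \<mu> u \<otimes> \<mu> v" using bm by (simp add: is_bimachine_def)
lemma mu_cons: "\<mu> (a # u) = \<mu> [a] \<otimes> \<mu> u" using mu_app[of "[a]" u] by simp
lemma fin: "finite (carrier M)" using bm by (simp add: is_bimachine_def)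

lemma mult_cons: "L \<in> carrier M \<Longrightarrow> L \<otimes> \<mu> (a # u) = (L \<otimes> \<mu> [a]) \<otimes> \<mu> u"
  by (subst mu_cons) (simp add: m_assoc)

lemma cc_append:
  assumes "L \<in> carrier M" "R \<in> carrier M"
  shows "cc M \<mu> lam L (u @ v) R = cc M \<mu> lam L u (\<mu> v \<otimes> R) + cc M \<mu> lam (L \<otimes> \<mu> u) v R"
  using assms(1)
proof (induction u arbitrary: L)
  case Nil
  then show ?case by simp
next
  case (Cons a u)
  have "cc M \<mu> lam L ((a # u) @ v) R = lam L a (\<mu> (u @ v) \<otimes> R) + cc M \<mu> lam (L \<otimes> \<mu> [a]) (u @ v) R"
    by simp
  also have "\<dots> = lam L a (\<mu> u \<otimes> (\<mu> v \<otimes> R)) + cc M \<mu> lam (L \<otimes> \<mu> [a]) u (\<mu> v \<otimes> R)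
     + cc M \<mu> lam ((L \<otimes> \<mu> [a]) \<otimes> \<mu> u) v R"
    using Cons assms by (simp add: mu_app m_assoc)
  also have "(L \<otimes> \<mu> [a]) \<otimes> \<mu> u = L \<otimes> \<mu> (a # u)"
    using Cons by (simp add: mult_cons[of L a u])
  finally show ?case by simp
qed

lemma cc_append3:
  assumes "L \<in> carrier M" "R \<in> carrier M"
  shows "cc M \<mu> lam L (x @ y @ z) R = cc M \<mu> lam L x (\<mu> (y @ z) \<otimes> R)
     + cc M \<mu> lam (L \<otimes> \<mu> x) y (\<mu> z \<otimes> R) + cc M \<mu> lam (L \<otimes> \<mu> (x @ y)) z R"
  using assms by (simp add: cc_append mu_app m_assoc)

lemma bimachine_cc_gen:
  assumes "L \<in> carrier M"
  shows "(\<Sum>i<length w. lam (L \<otimes> \<mu> (take i w)) (w ! i) (\<mu> (drop (Suc i) w) \<otimes> R)) = cc M \<mu> lam L w R"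
  using assms
proof (induction w arbitrary: L)
  case Nil
  then show ?case by simp
next
  case (Cons a w)
  have "(\<Sum>i<length (a # w). lam (L \<otimes> \<mu> (take i (a # w))) ((a # w) ! i) (\<mu> (drop (Suc i) (a # w)) \<otimes> R))
     = lam L a (\<mu> w \<otimes> R) + (\<Sum>i<length w. lam (L \<otimes> \<mu> (a # take i w)) (w ! i) (\<mu> (drop (Suc i) w) \<otimes> R))"
    using Cons.prems unfolding length_Cons sum.lessThan_Suc_shift by simp
  also have "(\<Sum>i<length w. lam (L \<otimes> \<mu> (a # take i w)) (w ! i) (\<mu> (drop (Suc i) w) \<otimes> R))
     = (\<Sum>i<length w. lam ((L \<otimes> \<mu> [a]) \<otimes> \<mu> (take i w)) (w ! i) (\<mu> (drop (Suc i) w) \<otimes> R))"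
    using Cons.prems by (intro sum.cong refl) (metis mult_cons)
  also have "\<dots> = cc M \<mu> lam (L \<otimes> \<mu> [a]) w R"
    using Cons by simp
  finally show ?case by simp
qed

lemma bimachine_cc: "bimachine_fun M \<mu> lam w = cc M \<mu> lam \<one> w \<one>"
  using bimachine_cc_gen[where L=\<one> and w=w and lam=lam and R=\<one>] by (simp add: bimachine_fun_def)

lemma mu_wpow_idem:
  assumes "\<mu> v \<otimes> \<mu> v = \<mu> v" "n \<ge> 1"
  shows "\<mu> (wpow v n) = \<mu> v"
  using assms(2)
proof (induction n)
  case 0 then show ?case by simp
next
  case (Suc n)
  show ?case
  proof (cases "n = 0")
    case True then show ?thesis by (simp add: wpow_Suc)
  next
    case False
    then have "\<mu> (wpow v n) = \<mu> v" using Suc by simp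
    then show ?thesis using assms(1) by (simp add: wpow_Suc mu_app)
  qed
qed

lemma cc_wpow_idem:
  assumes e: "\<mu> v \<otimes> \<mu> v = \<mu> v" and L: "L \<in> carrier M" and R: "R \<in> carrier M"
  shows "cc M \<mu> lam (L \<otimes> \<mu> v) (wpow v m) (\<mu> v \<otimes> R) = m * cc M \<mu> lam (L \<otimes> \<mu> v) v (\<mu> v \<otimes> R)"
proof (induction m)
  case 0 then show ?case by simp
next
  case (Suc m)
  have a: "\<mu> (wpow v m) \<otimes> (\<mu> v \<otimes> R) = \<mu> v \<otimes> R"
  proof (cases "m = 0")
    case True then show ?thesis using R by simp
  next
    case False
    then have "\<mu> (wpow v m) = \<mu> v" using mu_wpow_idem[OF e] by simp
    then show ?thesis using e R by (simp add: m_assoc[symmetric])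
  qed
  have b: "L \<otimes> \<mu> v \<otimes> \<mu> v = L \<otimes> \<mu> v" using e L by (simp add: m_assoc)
  show ?case using Suc L R by (simp add: wpow_Suc cc_append a b)
qed

lemma cc_wpow_lin:
  assumes e: "\<mu> v \<otimes> \<mu> v = \<mu> v" and L: "L \<in> carrier M" and R: "R \<in> carrier M"
  shows "\<exists>a b. \<forall>X\<ge>2. cc M \<mu> lam L (wpow v X) R = a + b * (X - 2)"
proof (intro exI allI impI)
  fix X :: nat assume X: "X \<ge> 2"
  then obtain n where n: "X = Suc (Suc n)" by (metis add_2_eq_Suc le_Suc_ex)
  have w: "wpow v X = v @ wpow v n @ v"
    unfolding n by (subst wpow_Suc) (simp add: wpow_Suc_right)
  have m1: "\<mu> (wpow v n @ v) = \<mu> v"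
    using mu_wpow_idem[OF e, of "Suc n"] by (simp add: wpow_Suc_right)
  have m2: "\<mu> (v @ wpow v n) = \<mu> v"
    using mu_wpow_idem[OF e, of "Suc n"] by (simp add: wpow_Suc)
  have "cc M \<mu> lam L (wpow v X) R = cc M \<mu> lam L v (\<mu> v \<otimes> R)
     + cc M \<mu> lam (L \<otimes> \<mu> v) (wpow v n) (\<mu> v \<otimes> R) + cc M \<mu> lam (L \<otimes> \<mu> v) v R"
    unfolding w using cc_append3[OF L R, where x=v and y="wpow v n" and z=v and lam=lam] m1 m2 by simp
  also have "\<dots> = cc M \<mu> lam L v (\<mu> v \<otimes> R) + cc M \<mu> lam (L \<otimes> \<mu> v) v R
     + cc M \<mu> lam (L \<otimes> \<mu> v) v (\<mu> v \<otimes> R) * (X - 2)"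
    using cc_wpow_idem[OF e L R, where m=n and lam=lam] n by simp
  finally show "cc M \<mu> lam L (wpow v X) R = (cc M \<mu> lam L v (\<mu> v \<otimes> R) + cc M \<mu> lam (L \<otimes> \<mu> v) v R)
     + cc M \<mu> lam (L \<otimes> \<mu> v) v (\<mu> v \<otimes> R) * (X - 2)" .
qed

definition good :: "nat \<Rightarrow> bool" where
  "good \<omega> \<longleftrightarrow> \<omega> > 0 \<and> (\<forall>u. \<mu> (wpow u \<omega>) \<otimes> \<mu> (wpow u \<omega>) = \<mu> (wpow u \<omega>))"

lemma mu_wpow_mult:
  assumes "good \<omega>" "n \<ge> 1"
  shows "\<mu> (wpow u (\<omega> * n)) = \<mu> (wpow u \<omega>)"
  using assms mu_wpow_idem[of "wpow u \<omega>" n] by (simp add: good_def wpow_mult)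

lemma mu_W:
  assumes "good \<omega>" "\<forall>i<k. Z ! i \<ge> 1" "\<forall>i<k. Z' ! i \<ge> 1"
  shows "\<mu> (Wword k as us \<omega> Z) = \<mu> (Wword k as us \<omega> Z')"
  using assms(2,3)
proof (induction k)
  case 0 then show ?case by (simp add: Wword_0)
next
  case (Suc k)
  then show ?case using mu_wpow_mult[OF assms(1), of "Z ! k"] mu_wpow_mult[OF assms(1), of "Z' ! k"]
    by (simp add: Wword_Suc mu_app)
qed

lemma cc_W_lin:
  assumes g: "good \<omega>"
  shows "\<forall>L R. L \<in> carrier M \<longrightarrow> R \<in> carrier M \<longrightarrow> (\<exists>a b. \<forall>Z. (\<forall>i<k. Z ! i \<ge> 2) \<longrightarrow>
     cc M \<mu> lam L (Wword k as us \<omega> Z) R = a + (\<Sum>i<k. b i * (Z ! i - 2)))"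
proof (induction k)
  case 0
  then show ?case by (simp add: Wword_0)
next
  case (Suc k)
  show ?case
  proof (intro allI impI)
    fix L R assume L: "L \<in> carrier M" and R: "R \<in> carrier M"
    define u where "u = us ! k"
    define ak where "ak = as ! Suc k"
    define v where "v = wpow u \<omega>"
    define Z1 where "Z1 = replicate k (1::nat)"
    define R' where "R' = \<mu> (v @ ak) \<otimes> R"
    define L' where "L' = L \<otimes> \<mu> (Wword k as us \<omega> Z1)"
    have R': "R' \<in> carrier M" using R by (simp add: R'_def)
    have L': "L' \<in> carrier M" using L by (simp add: L'_def)
    have e: "\<mu> v \<otimes> \<mu> v = \<mu> v" using g by (simp add: good_def v_def)
    obtain a1 b1 where ab1: "\<forall>Z. (\<forall>i<k. Z ! i \<ge> 2) \<longrightarrow>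
       cc M \<mu> lam L (Wword k as us \<omega> Z) R' = a1 + (\<Sum>i<k. b1 i * (Z ! i - 2))"
      using Suc L R' by blast
    obtain a2 b2 where ab2: "\<forall>X\<ge>2. cc M \<mu> lam L' (wpow v X) (\<mu> ak \<otimes> R) = a2 + b2 * (X - 2)"
      using cc_wpow_lin[OF e L', of "\<mu> ak \<otimes> R" lam] R by auto
    show "\<exists>a b. \<forall>Z. (\<forall>i<Suc k. Z ! i \<ge> 2) \<longrightarrow>
       cc M \<mu> lam L (Wword (Suc k) as us \<omega> Z) R = a + (\<Sum>i<Suc k. b i * (Z ! i - 2))"
    proof (intro exI allI impI)
      fix Z :: "nat list" assume Z: "\<forall>i<Suc k. Z ! i \<ge> 2"
      define P where "P = wpow u (\<omega> * Z ! k)"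
      have Pv: "P = wpow v (Z ! k)" by (simp add: P_def v_def wpow_mult)
      have "Z ! k \<ge> 1" using Z by (metis le_trans lessI one_le_numeral)
      then have muP: "\<mu> P = \<mu> v" using mu_wpow_mult[OF g, of "Z ! k" u] by (simp add: P_def v_def)
      have muW: "\<mu> (Wword k as us \<omega> Z) = \<mu> (Wword k as us \<omega> Z1)"
      proof (rule mu_W[OF g])
        show "\<forall>i<k. 1 \<le> Z ! i" using Z by (metis le_trans less_SucI one_le_numeral)
        show "\<forall>i<k. 1 \<le> Z1 ! i" by (simp add: Z1_def)
      qed
      have W: "Wword (Suc k) as us \<omega> Z = Wword k as us \<omega> Z @ P @ ak"
        by (simp add: Wword_Suc P_def u_def ak_def)
      have "cc M \<mu> lam L (Wword (Suc k) as us \<omega> Z) R =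
         cc M \<mu> lam L (Wword k as us \<omega> Z) R' + cc M \<mu> lam L' P (\<mu> ak \<otimes> R)
         + cc M \<mu> lam (L' \<otimes> \<mu> v) ak R"
        unfolding W cc_append3[OF L R] using L
        by (simp add: R'_def L'_def mu_app muP muW m_assoc)
      also have "\<dots> = (a1 + a2 + cc M \<mu> lam (L' \<otimes> \<mu> v) ak R) + ((\<Sum>i<k. b1 i * (Z ! i - 2)) + b2 * (Z ! k - 2))"
        using ab1 ab2 Z Pv by simp
      also have "(\<Sum>i<k. b1 i * (Z ! i - 2)) + b2 * (Z ! k - 2) = (\<Sum>i<Suc k. (b1(k := b2)) i * (Z ! i - 2))"
        by simp
      finally show "cc M \<mu> lam L (Wword (Suc k) as us \<omega> Z) R =
         (a1 + a2 + cc M \<mu> lam (L' \<otimes> \<mu> v) ak R) + (\<Sum>i<Suc k. (b1(k := b2)) i * (Z ! i - 2))" .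
    qed
  qed
qed

lemma mu_wpow_pow: "\<mu> (wpow u n) = \<mu> u [^] n"
  by (induction n) (simp_all add: wpow_Suc_right mu_app)

lemma pow_idem:
  assumes m: "m \<in> carrier M"
  shows "\<exists>e\<ge>1. \<forall>\<omega>::nat. e dvd \<omega> \<and> \<omega> > 0 \<longrightarrow> m [^] \<omega> \<otimes> m [^] \<omega> = m [^] \<omega>"
proof -
  have "\<not> inj_on (\<lambda>n. m [^] n) {..card (carrier M)}"
  proof
    assume inj: "inj_on (\<lambda>n. m [^] n) {..card (carrier M)}"
    have "(\<lambda>n. m [^] n) ` {..card (carrier M)} \<subseteq> carrier M" using m by auto
    then have "card {..card (carrier M)} \<le> card (carrier M)"
      using card_inj_on_le[OF inj _ fin] by simp
    then show False by simp
  qed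
  then obtain i j :: nat where ij: "i \<noteq> j" "m [^] i = m [^] j"
    unfolding inj_on_def by blast
  then obtain i p :: nat where ip: "p \<ge> 1" "m [^] i = m [^] (i + p)"
  proof (cases "i < j")
    case True
    then show ?thesis using that[of "j - i" i] ij by simp
  next
    case False
    then show ?thesis using that[of "i - j" j] ij by simp
  qed
  have per: "m [^] (i + r + t * p) = m [^] (i + r)" for r t :: nat
  proof (induction t)
    case 0 then show ?case by simp
  next
    case (Suc t)
    have "m [^] (i + r + Suc t * p) = m [^] (i + p) \<otimes> m [^] (r + t * p)"
      using m by (simp add: nat_pow_mult algebra_simps)
    also have "\<dots> = m [^] i \<otimes> m [^] (r + t * p)" using ip by simp
    also have "\<dots> = m [^] (i + r + t * p)" using m by (simp add: nat_pow_mult algebra_simps)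
    finally show ?case using Suc by simp
  qed
  show ?thesis
  proof (rule exI[where x="(i + 1) * p"], intro conjI allI impI)
    show "1 \<le> (i + 1) * p" using ip by simp
    fix \<omega> :: nat assume w: "(i + 1) * p dvd \<omega> \<and> 0 < \<omega>"
    then obtain c where c: "\<omega> = (i + 1) * p * c" by blast
    with w have "c \<ge> 1" by (cases c) auto
    then have "(i + 1) * 1 * 1 \<le> (i + 1) * p * c" using ip by (intro mult_le_mono) simp_all
    then have "\<omega> \<ge> i + 1" using c by simp
    have "m [^] \<omega> \<otimes> m [^] \<omega> = m [^] (\<omega> + \<omega>)" using m by (simp add: nat_pow_mult)
    also have "\<omega> + \<omega> = i + (\<omega> - i) + ((i + 1) * c) * p" using c \<open>\<omega> \<ge> i + 1\<close> by (simp add: algebra_simps)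
    also have "m [^] (i + (\<omega> - i) + ((i + 1) * c) * p) = m [^] (i + (\<omega> - i))" by (rule per)
    also have "i + (\<omega> - i) = \<omega>" using \<open>\<omega> \<ge> i + 1\<close> by simp
    finally show "m [^] \<omega> \<otimes> m [^] \<omega> = m [^] \<omega>" .
  qed
qed

lemma good_exists: "\<exists>\<omega>0\<ge>1. \<forall>\<omega>. \<omega>0 dvd \<omega> \<and> \<omega> > 0 \<longrightarrow> good \<omega>"
proof -
  obtain E :: "nat \<Rightarrow> nat" where E: "\<And>m. m \<in> carrier M \<Longrightarrow> E m \<ge> 1 \<and> (\<forall>\<omega>::nat. E m dvd \<omega> \<and> \<omega> > 0 \<longrightarrow> m [^] \<omega> \<otimes> m [^] \<omega> = m [^] \<omega>)"
    using pow_idem by metis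
  define w0 where "w0 = (\<Prod>m\<in>carrier M. E m)"
  have "w0 \<ge> 1" unfolding w0_def using E by (simp add: Suc_le_eq prod_pos)
  moreover have "good \<omega>" if "w0 dvd \<omega>" "\<omega> > 0" for \<omega>
    unfolding good_def
  proof (intro conjI allI)
    show "\<omega> > 0" by fact
    fix u
    have "E (\<mu> u) dvd w0" unfolding w0_def by (rule dvd_prodI[OF fin mu_in])
    then have "E (\<mu> u) dvd \<omega>" using that dvd_trans by blast
    then show "\<mu> (wpow u \<omega>) \<otimes> \<mu> (wpow u \<omega>) = \<mu> (wpow u \<omega>)"
      using E[OF mu_in] that by (simp add: mu_wpow_pow)
  qed
  ultimately show ?thesis by blast
qed

lemma cc_append5:
  assumes "L \<in> carrier M" "R \<in> carrier M"
  shows "cc M \<mu> lam L (x1 @ x2 @ x3 @ x4 @ x5) R = cc M \<mu> lam L x1 (\<mu> (x2 @ x3 @ x4 @ x5) \<otimes> R)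
     + cc M \<mu> lam (L \<otimes> \<mu> x1) x2 (\<mu> (x3 @ x4 @ x5) \<otimes> R)
     + cc M \<mu> lam (L \<otimes> \<mu> (x1 @ x2)) x3 (\<mu> (x4 @ x5) \<otimes> R)
     + cc M \<mu> lam (L \<otimes> \<mu> (x1 @ x2 @ x3)) x4 (\<mu> x5 \<otimes> R)
     + cc M \<mu> lam (L \<otimes> \<mu> (x1 @ x2 @ x3 @ x4)) x5 R"
  using assms by (simp add: cc_append mu_app m_assoc)

lemma regular_rep: "k_repetitive k (bimachine_fun M \<mu> lam)"
proof -
  obtain w0 where w0: "w0 \<ge> 1" "\<forall>\<omega>. w0 dvd \<omega> \<and> \<omega> > 0 \<longrightarrow> good \<omega>"
    using good_exists by blast
  show ?thesis
    unfolding k_repetitive_def Let_def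
  proof (intro exI[where x=w0] conjI allI impI)
    show "1 \<le> w0" by fact
    fix \<alpha> \<beta> as us :: "'a list list" and \<omega> :: nat
    fix \<alpha> \<beta> :: "'a list"
    assume "length as = k + 1" "length us = k" "w0 dvd \<omega>" "0 < \<omega>"
    then have g: "good \<omega>" using w0 by blast
    then have om: "\<omega> \<ge> 1" by (simp add: good_def)
    define w where "w = Wword k as us \<omega> (replicate k 1)"
    define A1 where "A1 = wpow w (2 * \<omega> - 1)"
    define A2 where "A2 = wpow w (\<omega> - 1)"
    define A3 where "A3 = wpow w \<omega>"
    have e: "\<mu> A3 \<otimes> \<mu> A3 = \<mu> A3" using g by (simp add: good_def A3_def)
    have E1: "\<mu> (A2 @ w @ A3 @ \<beta>) = \<mu> (A3 @ \<beta>)"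
    proof -
      have "A2 @ w = A3" unfolding A2_def A3_def using om
        by (metis Suc_diff_1 less_le_trans wpow_Suc_right zero_less_one)
      then have "\<mu> (A2 @ w @ A3 @ \<beta>) = \<mu> A3 \<otimes> (\<mu> A3 \<otimes> \<mu> \<beta>)"
        by (metis append.assoc mu_app)
      also have "\<dots> = (\<mu> A3 \<otimes> \<mu> A3) \<otimes> \<mu> \<beta>" by (simp add: m_assoc)
      finally show ?thesis using e by (simp add: mu_app)
    qed
    have E2: "\<mu> (\<alpha> @ A1 @ w @ A2) = \<mu> (\<alpha> @ A1)"
    proof -
      have "A1 @ w = wpow w (Suc (2 * \<omega> - 1))" by (simp add: A1_def wpow_Suc_right)
      also have "Suc (2 * \<omega> - 1) = \<omega> + \<omega>" using om by simp
      finally have a: "A1 @ w = A3 @ A3" by (simp add: wpow_add A3_def)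
      have b: "A3 @ A2 = A1" unfolding A1_def A2_def A3_def using om
        by (simp add: wpow_add[symmetric] mult_2)
      have "\<mu> (A1 @ w @ A2) = \<mu> ((A1 @ w) @ A2)" by simp
      also have "\<dots> = \<mu> A3 \<otimes> \<mu> A3 \<otimes> \<mu> A2" unfolding a by (simp add: mu_app m_assoc)
      also have "\<dots> = \<mu> (A3 @ A2)" using e by (simp add: mu_app)
      finally have "\<mu> (A1 @ w @ A2) = \<mu> A1" unfolding b .
      then show ?thesis by (simp add: mu_app)
    qed
    define P where "P = \<mu> (\<alpha> @ A1)"
    define S where "S = \<mu> (A3 @ \<beta>)"
    obtain a b where ab: "\<forall>Z. (\<forall>i<k. Z ! i \<ge> 2) \<longrightarrow>
       cc M \<mu> lam P (Wword k as us \<omega> Z) S = a + (\<Sum>i<k. b i * (Z ! i - 2))"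
      using cc_W_lin[OF g, where k=k and as=as and us=us and lam=lam] unfolding P_def S_def by (meson mu_in)
    define K where "K = cc M \<mu> lam \<one> (\<alpha> @ A1) (\<mu> (w @ A2 @ w @ A3 @ \<beta>))
      + cc M \<mu> lam (\<mu> (\<alpha> @ A1 @ w)) A2 (\<mu> (w @ A3 @ \<beta>))
      + cc M \<mu> lam (\<mu> (\<alpha> @ A1 @ w @ A2 @ w)) (A3 @ \<beta>) \<one>"
    show "\<exists>F. \<forall>X Y. length X = k \<longrightarrow> length Y = k \<longrightarrow> (\<forall>i<k. 3 \<le> X ! i \<and> 3 \<le> Y ! i) \<longrightarrow>
         bimachine_fun M \<mu> lam (\<alpha> @ wpow w (2 * \<omega> - 1) @ Wword k as us \<omega> X @ wpow w (\<omega> - 1) @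
              Wword k as us \<omega> Y @ wpow w \<omega> @ \<beta>) = F (map2 (+) X Y)"
      unfolding w_def[symmetric]
    proof (intro exI[where x="\<lambda>T. K + 2 * a + (\<Sum>i<k. b i * (T ! i - 4))"] allI impI)
      fix X Y :: "nat list"
      assume lX: "length X = k" and lY: "length Y = k" and XY: "\<forall>i<k. 3 \<le> X ! i \<and> 3 \<le> Y ! i"
      define WX where "WX = Wword k as us \<omega> X"
      define WY where "WY = Wword k as us \<omega> Y"
      have muWX: "\<mu> WX = \<mu> w" unfolding WX_def w_def
        by (rule mu_W[OF g]) (use XY in auto)
      have muWY: "\<mu> WY = \<mu> w" unfolding WY_def w_def
        by (rule mu_W[OF g]) (use XY in auto)
      have cX: "cc M \<mu> lam P WX S = a + (\<Sum>i<k. b i * (X ! i - 2))"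
      proof -
        have "\<forall>i<k. 2 \<le> X ! i" using XY by (metis le_trans numeral_le_iff semiring_norm(69) semiring_norm(72) le_refl)
        then show ?thesis unfolding WX_def using ab by blast
      qed
      have cY: "cc M \<mu> lam P WY S = a + (\<Sum>i<k. b i * (Y ! i - 2))"
      proof -
        have "\<forall>i<k. 2 \<le> Y ! i" using XY by (metis le_trans numeral_le_iff semiring_norm(69) semiring_norm(72) le_refl)
        then show ?thesis unfolding WY_def using ab by blast
      qed
      have "bimachine_fun M \<mu> lam ((\<alpha> @ A1) @ WX @ A2 @ WY @ (A3 @ \<beta>))
          = cc M \<mu> lam \<one> (\<alpha> @ A1) (\<mu> (WX @ A2 @ WY @ A3 @ \<beta>))
          + cc M \<mu> lam P WX (\<mu> (A2 @ WY @ A3 @ \<beta>))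
          + cc M \<mu> lam (\<mu> (\<alpha> @ A1 @ WX)) A2 (\<mu> (WY @ A3 @ \<beta>))
          + cc M \<mu> lam (\<mu> (\<alpha> @ A1 @ WX @ A2)) WY S
          + cc M \<mu> lam (\<mu> (\<alpha> @ A1 @ WX @ A2 @ WY)) (A3 @ \<beta>) \<one>"
        unfolding bimachine_cc cc_append5[OF one_closed one_closed] P_def S_def by simp
      also have "\<dots> = K + cc M \<mu> lam P WX S + cc M \<mu> lam P WY S"
      proof -
        have 1: "\<mu> (WX @ A2 @ WY @ A3 @ \<beta>) = \<mu> (w @ A2 @ w @ A3 @ \<beta>)"
          by (simp add: mu_app muWX muWY)
        have 2: "\<mu> (A2 @ WY @ A3 @ \<beta>) = S"
          using E1 by (simp add: S_def mu_app muWY)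
        have 3: "\<mu> (\<alpha> @ A1 @ WX) = \<mu> (\<alpha> @ A1 @ w)"
          by (simp add: mu_app muWX)
        have 4: "\<mu> (WY @ A3 @ \<beta>) = \<mu> (w @ A3 @ \<beta>)"
          by (simp add: mu_app muWY)
        have 5: "\<mu> (\<alpha> @ A1 @ WX @ A2) = P"
          using E2 by (simp add: P_def mu_app muWX)
        have 6: "\<mu> (\<alpha> @ A1 @ WX @ A2 @ WY) = \<mu> (\<alpha> @ A1 @ w @ A2 @ w)"
          by (simp add: mu_app muWX muWY)
        show ?thesis unfolding 1 2 3 4 5 6 K_def by simp
      qed
      also have "\<dots> = K + 2 * a + (\<Sum>i<k. b i * (map2 (+) X Y ! i - 4))"
      proof -
        have "(\<Sum>i<k. b i * (X ! i - 2)) + (\<Sum>i<k. b i * (Y ! i - 2)) = (\<Sum>i<k. b i * (map2 (+) X Y ! i - 4))"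
          unfolding sum.distrib[symmetric]
        proof (rule sum.cong[OF refl])
          fix i assume "i \<in> {..<k}"
          then have i: "i < k" by simp
          then have "map2 (+) X Y ! i = X ! i + Y ! i" using lX lY by simp
          moreover have "X ! i \<ge> 3" "Y ! i \<ge> 3" using XY i by auto
          ultimately show "b i * (X ! i - 2) + b i * (Y ! i - 2) = b i * (map2 (+) X Y ! i - 4)"
            by (simp add: add_mult_distrib2[symmetric])
        qed
        then show ?thesis using cX cY by simp
      qed
      finally show "bimachine_fun M \<mu> lam (\<alpha> @ wpow w (2 * \<omega> - 1) @ Wword k as us \<omega> X @ wpow w (\<omega> - 1) @
              Wword k as us \<omega> Y @ wpow w \<omega> @ \<beta>)
          = (\<lambda>T. K + 2 * a + (\<Sum>i<k. b i * (T ! i - 4))) (map2 (+) X Y)"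
        unfolding A1_def A2_def A3_def WX_def WY_def by simp
    qed
  qed
qed

end


definition rword :: "nat \<Rightarrow> 'a list list \<Rightarrow> 'a list list \<Rightarrow> nat \<Rightarrow> 'a list \<Rightarrow> 'a list \<Rightarrow> nat list \<Rightarrow> nat list \<Rightarrow> 'a list" where
  "rword k as us \<omega> \<alpha> \<beta> X Y = \<alpha> @ wpow (Wword k as us \<omega> (replicate k 1)) (2 * \<omega> - 1) @ Wword k as us \<omega> X @
     wpow (Wword k as us \<omega> (replicate k 1)) (\<omega> - 1) @
     Wword k as us \<omega> Y @ wpow (Wword k as us \<omega> (replicate k 1)) \<omega> @ \<beta>"

lemma krep_alt: "k_repetitive k f \<longleftrightarrow> (\<exists>\<omega>0::nat. \<omega>0 \<ge> 1 \<and>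
     (\<forall>\<alpha> \<beta> (as :: 'a list list) (us :: 'a list list) (\<omega>::nat).
        length as = k + 1 \<longrightarrow> length us = k \<longrightarrow> \<omega>0 dvd \<omega> \<longrightarrow> \<omega> > 0 \<longrightarrow>
         (\<exists>F :: nat list \<Rightarrow> nat. \<forall>X Y :: nat list.
           length X = k \<longrightarrow> length Y = k \<longrightarrow> (\<forall>i<k. X ! i \<ge> 3 \<and> Y ! i \<ge> 3) \<longrightarrow>
           f (rword k as us \<omega> \<alpha> \<beta> X Y) = F (map2 (+) X Y))))"
  unfolding k_repetitive_def rword_def Let_def by (rule refl)

lemma rep_comb:
  assumes f: "k_repetitive k f" and g: "k_repetitive k g"
  shows "k_repetitive k (\<lambda>w. h (f w) (g w))"
proof -
  obtain w1 where w1: "w1 \<ge> 1" "\<And>\<alpha> \<beta> (as :: 'a list list) (us :: 'a list list) (\<omega>::nat).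
        length as = k + 1 \<Longrightarrow> length us = k \<Longrightarrow> w1 dvd \<omega> \<Longrightarrow> \<omega> > 0 \<Longrightarrow>
        (\<exists>F :: nat list \<Rightarrow> nat. \<forall>X Y :: nat list.
           length X = k \<longrightarrow> length Y = k \<longrightarrow> (\<forall>i<k. X ! i \<ge> 3 \<and> Y ! i \<ge> 3) \<longrightarrow>
           f (rword k as us \<omega> \<alpha> \<beta> X Y) = F (map2 (+) X Y))"
    using f unfolding krep_alt by blast
  obtain w2 where w2: "w2 \<ge> 1" "\<And>\<alpha> \<beta> (as :: 'a list list) (us :: 'a list list) (\<omega>::nat).
        length as = k + 1 \<Longrightarrow> length us = k \<Longrightarrow> w2 dvd \<omega> \<Longrightarrow> \<omega> > 0 \<Longrightarrow>
        (\<exists>F :: nat list \<Rightarrow> nat. \<forall>X Y :: nat list.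
           length X = k \<longrightarrow> length Y = k \<longrightarrow> (\<forall>i<k. X ! i \<ge> 3 \<and> Y ! i \<ge> 3) \<longrightarrow>
           g (rword k as us \<omega> \<alpha> \<beta> X Y) = F (map2 (+) X Y))"
    using g unfolding krep_alt by blast
  show ?thesis
    unfolding krep_alt
  proof (intro exI[where x="w1 * w2"] conjI allI impI)
    show "1 \<le> w1 * w2" using w1 w2 by simp
    fix \<alpha> \<beta> :: "'a list" and as us :: "'a list list" and \<omega> :: nat
    assume a: "length as = k + 1" "length us = k" "w1 * w2 dvd \<omega>" "0 < \<omega>"
    have d: "w1 dvd \<omega>" "w2 dvd \<omega>" using a(3) dvd_mult_left dvd_mult_right by blast+
    obtain F1 where F1: "\<forall>X Y :: nat list.
           length X = k \<longrightarrow> length Y = k \<longrightarrow> (\<forall>i<k. X ! i \<ge> 3 \<and> Y ! i \<ge> 3) \<longrightarrow>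
           f (rword k as us \<omega> \<alpha> \<beta> X Y) = F1 (map2 (+) X Y)"
      using w1(2)[OF a(1) a(2) d(1) a(4)] by blast
    obtain F2 where F2: "\<forall>X Y :: nat list.
           length X = k \<longrightarrow> length Y = k \<longrightarrow> (\<forall>i<k. X ! i \<ge> 3 \<and> Y ! i \<ge> 3) \<longrightarrow>
           g (rword k as us \<omega> \<alpha> \<beta> X Y) = F2 (map2 (+) X Y)"
      using w2(2)[OF a(1) a(2) d(2) a(4)] by blast
    show "\<exists>F. \<forall>X Y. length X = k \<longrightarrow> length Y = k \<longrightarrow> (\<forall>i<k. 3 \<le> X ! i \<and> 3 \<le> Y ! i) \<longrightarrow>
           h (f (rword k as us \<omega> \<alpha> \<beta> X Y)) (g (rword k as us \<omega> \<alpha> \<beta> X Y)) = F (map2 (+) X Y)"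
      by (rule exI[where x="\<lambda>T. h (F1 T) (F2 T)"]) (simp add: F1 F2)
  qed
qed

theorem mainTheorem1:
  fixes f :: "'a::finite list \<Rightarrow> nat"
  assumes "polyblind f"
  shows "\<forall>k::nat. k \<ge> 1 \<longrightarrow> k_repetitive k f"
proof (intro allI impI)
  fix k :: nat
  show "k_repetitive k f" using assms
  proof (induction rule: polyblind.induct)
    case (reg f)
    then obtain M :: "nat monoid" and \<mu> lam where "is_bimachine M \<mu>" "f = bimachine_fun M \<mu> lam"
      unfolding regular_fun_def by blast
    then show ?case using bm.regular_rep[of M \<mu>] by (simp add: bm_def)
  next
    case (sum f g)
    then show ?case using rep_comb[where h="(+)"] by blast
  next
    case (prod f g)
    then show ?case using rep_comb[where h="(*)"] by blast
  qed
qed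

end
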